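(* Let $G$ be a simple graph on $[n]$ and let $G^*$ be its associated directed graph. Then $G$ is closed with respect to the given labeling if and only if for any two vertices $i\neq j$ of $G^*$, all paths of shortest length from $i$ to $j$ are directed.
   Context: $G$ is closed with respect to the given labeling if for all distinct edges $\{i,j\}$ and $\{k,l\}$ of $G$ with $i<j$ and $k<l$ one has $\{j,l\}\in E(G)$ whenever $i=k$, and $\{i,k\}\in E(G)$ whenever $j=l$. The associated directed graph $G^*$ has vertex set $[n]$ and an arrow $(i,j)$ whenever $\{i,j\}\in E(G)$ and $i<j$. A path from $v$ to $w$ is a sequence of vertices $v=v_0,v_1,\ldots,v_l=w$ such that each $\{v_k,v_{k+1}\}$ is an edge of the underlying graph; in $G^*$ such a path is called directed if either $(v_k,v_{k+1})$ is an arrow for all $k$, or $(v_{k+1},v_k)$ is an arrow for all $k$. *)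

theory Defs
  imports Main
begin

definition simple_graph_on :: "nat \<Rightarrow> nat set set \<Rightarrow> bool" where
  "simple_graph_on n E \<longleftrightarrow>
     (\<forall>e\<in>E. \<exists>i j. e = {i, j} \<and> i \<noteq> j \<and> i \<in> {1..n} \<and> j \<in> {1..n})"

definition closed_graph :: "nat set set \<Rightarrow> bool" where
  "closed_graph E \<longleftrightarrow>
     (\<forall>i j k l. {i, j} \<in> E \<and> {k, l} \<in> E \<and> {i, j} \<noteq> {k, l} \<and> i < j \<and> k < l \<longrightarrow>
        (i = k \<longrightarrow> {j, l} \<in> E) \<and> (j = l \<longrightarrow> {i, k} \<in> E))"

definition arrows :: "nat set set \<Rightarrow> (nat \<times> nat) set" where
  "arrows E = {(i, j). {i, j} \<in> E \<and> i < j}"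

definition is_path :: "nat set set \<Rightarrow> nat list \<Rightarrow> nat \<Rightarrow> nat \<Rightarrow> bool" where
  "is_path E vs v w \<longleftrightarrow> vs \<noteq> [] \<and> hd vs = v \<and> last vs = w \<and>
     (\<forall>k < length vs - 1. {vs ! k, vs ! (k + 1)} \<in> E)"

definition directed_path :: "nat set set \<Rightarrow> nat list \<Rightarrow> bool" where
  "directed_path E vs \<longleftrightarrow>
     (\<forall>k < length vs - 1. (vs ! k, vs ! (k + 1)) \<in> arrows E) \<or>
     (\<forall>k < length vs - 1. (vs ! (k + 1), vs ! k) \<in> arrows E)"

definition shortest_path :: "nat set set \<Rightarrow> nat list \<Rightarrow> nat \<Rightarrow> nat \<Rightarrow> bool" where
  "shortest_path E vs v w \<longleftrightarrow> is_path E vs v w \<and>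
     (\<forall>ws. is_path E ws v w \<longrightarrow> length vs \<le> length ws)"

end

theory Submission
  imports Defs
begin

lemma succ_nth: "(\<forall>k < length xs - 1. P (xs!k) (xs!(k+1))) \<longleftrightarrow> successively P xs"
proof (induction xs rule: induct_list012)
  case (3 x y xs)
  have "(\<forall>k < length (x#y#xs) - 1. P ((x#y#xs)!k) ((x#y#xs)!(k+1))) \<longleftrightarrow>
        P x y \<and> (\<forall>k < length (y#xs) - 1. P ((y#xs)!k) ((y#xs)!(k+1)))"
    (is "?L \<longleftrightarrow> ?R")
  proof
    assume L: ?L
    show ?R
    proof
      show "P x y" using spec[OF L, of 0] by simp
      show "\<forall>k < length (y#xs) - 1. P ((y#xs)!k) ((y#xs)!(k+1))"
        using L by (metis Suc_eq_plus1 Suc_less_eq length_Cons diff_Suc_1 nth_Cons_Suc)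
    qed
  next
    assume R: ?R
    show ?L
    proof (intro allI impI)
      fix k assume "k < length (x#y#xs) - 1"
      then show "P ((x#y#xs)!k) ((x#y#xs)!(k+1))"
        using R by (cases k) auto
    qed
  qed
  then show ?case using 3 by simp
qed auto

lemma path_succ: "is_path E vs v w \<longleftrightarrow> vs \<noteq> [] \<and> hd vs = v \<and> last vs = w \<and>
   successively (\<lambda>a b. {a,b} \<in> E) vs"
  unfolding is_path_def using succ_nth[of vs "\<lambda>a b. {a,b} \<in> E"] by simp

lemma dir_succ: "directed_path E vs \<longleftrightarrow>
   successively (\<lambda>a b. (a,b) \<in> arrows E) vs \<or> successively (\<lambda>a b. (b,a) \<in> arrows E) vs"
  unfolding directed_path_def
  using succ_nth[of vs "\<lambda>a b. (a,b) \<in> arrows E"] succ_nth[of vs "\<lambda>a b. (b,a) \<in> arrows E"]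
  by simp

lemma turn:
  fixes vs :: "nat list"
  assumes "successively (\<noteq>) vs" "\<not> successively (<) vs" "\<not> successively (>) vs"
  shows "\<exists>xs x y z ys. vs = xs @ x#y#z#ys \<and> ((x<y \<and> z<y) \<or> (y<x \<and> y<z))"
  using assms
proof (induction vs)
  case Nil then show ?case by simp
next
  case (Cons a rest)
  show ?case
  proof (cases "\<not> successively (<) rest \<and> \<not> successively (>) rest")
    case True
    have "successively (\<noteq>) rest" using Cons.prems(1) by (auto simp: successively_Cons)
    then obtain xs x y z ys where "rest = xs @ x#y#z#ys" "((x<y \<and> z<y) \<or> (y<x \<and> y<z))"
      using Cons.IH True by blast
    then show ?thesis by (metis append_Cons)
  next
    case False
    obtain b rest' where r: "rest = b#rest'" using Cons.prems by (cases rest) auto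
    have ab: "a \<noteq> b" using Cons.prems r by simp
    show ?thesis
    proof (cases rest')
      case Nil then show ?thesis using Cons.prems r ab by auto
    next
      case (Cons c rest'')
      show ?thesis
      proof (cases "successively (<) rest")
        case True
        then have "b < c" using r Cons by simp
        moreover have "b < a" using True Cons.prems(2) r ab by auto
        ultimately show ?thesis using r Cons by (metis append_Nil)
      next
        case f2: False
        then have s: "successively (>) rest" using False by simp
        then have "c < b" using r Cons by simp
        moreover have "a < b" using s Cons.prems(3) r ab by auto
        ultimately show ?thesis using r Cons by (metis append_Nil)
      qed
    qed
  qed
qed

lemma succ_conj: "successively P xs \<Longrightarrow> successively Q xs \<Longrightarrow> successively (\<lambda>a b. P a b \<and> Q a b) xs"
  by (induction xs rule: induct_list012) auto

lemma edge_in: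
  assumes "simple_graph_on n E" "{a,b} \<in> E"
  shows "a \<noteq> b \<and> a \<in> {1..n} \<and> b \<in> {1..n}"
proof -
  obtain i j where "{a,b} = {i,j}" "i \<noteq> j" "i \<in> {1..n}" "j \<in> {1..n}"
    using assms unfolding simple_graph_on_def by blast
  then show ?thesis by (metis doubleton_eq_iff)
qed

theorem proposition1p4:
  fixes n :: nat and E :: "nat set set"
  assumes "simple_graph_on n E"
  shows "closed_graph E \<longleftrightarrow>
    (\<forall>i\<in>{1..n}. \<forall>j\<in>{1..n}. i \<noteq> j \<longrightarrow>
       (\<forall>vs. shortest_path E vs i j \<longrightarrow> directed_path E vs))"
proof
  assume cl: "closed_graph E"
  show "\<forall>i\<in>{1..n}. \<forall>j\<in>{1..n}. i \<noteq> j \<longrightarrow>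
       (\<forall>vs. shortest_path E vs i j \<longrightarrow> directed_path E vs)"
  proof (intro ballI impI allI, rule ccontr)
    fix i j vs
    assume sp: "shortest_path E vs i j" and nd: "\<not> directed_path E vs"
    have p: "vs \<noteq> []" "hd vs = i" "last vs = j" and s: "successively (\<lambda>a b. {a,b} \<in> E) vs"
      using sp unfolding shortest_path_def path_succ by auto
    have nl: "\<And>x y. {x,y} \<in> E \<Longrightarrow> x \<noteq> y" using edge_in[OF assms] by blast
    have ne: "successively (\<noteq>) vs"
      by (rule successively_mono[OF s]) (rule nl)
    have nu: "\<not> successively (<) vs"
    proof
      assume a: "successively (<) vs"
      have "successively (\<lambda>a b. (a,b) \<in> arrows E) vs"
        using successively_mono[OF succ_conj[OF s a]]
        unfolding arrows_def by auto
      then show False using nd dir_succ by blast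
    qed
    have nd2: "\<not> successively (>) vs"
    proof
      assume a: "successively (>) vs"
      have "successively (\<lambda>a b. (b,a) \<in> arrows E) vs"
        using successively_mono[OF succ_conj[OF s a]]
        unfolding arrows_def by (auto simp: insert_commute)
      then show False using nd dir_succ by blast
    qed
    obtain xs x y z ys where vs: "vs = xs @ x#y#z#ys"
      and t: "(x<y \<and> z<y) \<or> (y<x \<and> y<z)"
      using turn[OF ne nu nd2] by blast
    have sx: "successively (\<lambda>a b. {a,b} \<in> E) (xs @ [x])"
      and sys: "successively (\<lambda>a b. {a,b} \<in> E) (z#ys)"
      and exy: "{x,y} \<in> E" and eyz: "{y,z} \<in> E"
      using s unfolding vs
      by (auto simp: successively_append_iff successively_Cons)
    have sx': "successively (\<lambda>a b. {a,b} \<in> E) xs" "xs \<noteq> [] \<longrightarrow> {last xs, x} \<in> E"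
      using sx by (auto simp: successively_append_iff)
    show False
    proof (cases "x = z")
      case True
      define ws where "ws = xs @ x # ys"
      have "is_path E ws i j"
        unfolding path_succ ws_def using p sx' sys True unfolding vs
        by (auto simp: successively_append_iff successively_Cons hd_append)
      then have "length vs \<le> length ws" using sp unfolding shortest_path_def by blast
      then show False unfolding vs ws_def by simp
    next
      case False
      have xz: "{x,z} \<in> E"
      proof (cases "x<y \<and> z<y")
        case True
        have "{x,y} \<noteq> {z,y}" using False by (auto simp: doubleton_eq_iff)
        moreover have "{z,y} \<in> E" using eyz by (simp add: insert_commute)
        ultimately show ?thesis using cl True exy unfolding closed_graph_def
          by blast
      next
        case f: False
        then have "y<x" "y<z" using t by auto
        moreover have "{y,x} \<noteq> {y,z}" using False by (auto simp: doubleton_eq_iff)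
        moreover have "{y,x} \<in> E" using exy by (simp add: insert_commute)
        ultimately have "{x,z} \<in> E \<or> {z,x} \<in> E" using cl eyz unfolding closed_graph_def
          by blast
        then show ?thesis by (auto simp: insert_commute)
      qed
      define ws where "ws = xs @ x # z # ys"
      have "is_path E ws i j"
        unfolding path_succ ws_def using p sx' sys xz unfolding vs
        by (auto simp: successively_append_iff successively_Cons hd_append)
      then have "length vs \<le> length ws" using sp unfolding shortest_path_def by blast
      then show False unfolding vs ws_def by simp
    qed
  qed
next
  assume H: "\<forall>i\<in>{1..n}. \<forall>j\<in>{1..n}. i \<noteq> j \<longrightarrow>
       (\<forall>vs. shortest_path E vs i j \<longrightarrow> directed_path E vs)"
  have key: "{a,b} \<in> E" if "{m,a} \<in> E" "{m,b} \<in> E" "a \<noteq> b"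
    "(m < a \<and> m < b) \<or> (a < m \<and> b < m)" for m a b
  proof (rule ccontr)
    assume nab: "{a,b} \<notin> E"
    have ain: "a \<in> {1..n}" "b \<in> {1..n}" using edge_in[OF assms] that by blast+
    have pth: "is_path E [a,m,b] a b" using that unfolding path_succ
      by (simp add: insert_commute)
    have "\<not> directed_path E [a,m,b]" using that(4)
      unfolding dir_succ arrows_def by auto
    then have "\<not> shortest_path E [a,m,b] a b" using H ain that(3) by blast
    then obtain ws where ws: "is_path E ws a b" "length ws < 3"
      using pth unfolding shortest_path_def by force
    then have "ws \<noteq> []" "hd ws = a" "last ws = b" "successively (\<lambda>x y. {x,y} \<in> E) ws"
      unfolding path_succ by auto
    moreover have "length ws = 1 \<or> length ws = 2" using ws(2) calculation(1) by (cases ws) (auto simp: less_Suc_eq numeral_2_eq_2)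
    ultimately show False using nab that(3)
      by (auto simp: length_Suc_conv numeral_2_eq_2)
  qed
  show "closed_graph E"
    unfolding closed_graph_def
  proof (intro allI impI)
    fix i j k l assume h: "{i, j} \<in> E \<and> {k, l} \<in> E \<and> {i, j} \<noteq> {k, l} \<and> i < j \<and> k < l"
    have 1: "i = k \<longrightarrow> {j, l} \<in> E"
      using h key[of i j l] by auto
    have 2: "j = l \<longrightarrow> {i, k} \<in> E"
      using h key[of j i k] by (auto simp: insert_commute)
    show "(i = k \<longrightarrow> {j, l} \<in> E) \<and> (j = l \<longrightarrow> {i, k} \<in> E)" using 1 2 by blast
  qed
qed

end
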